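(* Consider NSGA-III (as defined in the context) on an arbitrary $m$-objective function $f:\{0,1\}^n\to\mathbb N_0^m$ with $\varepsilon_{\mathrm{nad}}\ge f_{\max}$ and reference set $\mathcal R_p$ with $p\ge 2m^{3/2}f_{\max}$, any population size, any initial population and any rule for choosing the extreme points. Then in every generation $t$, any two search points in $F^1_t$ that are associated with the same reference point of $\mathcal R_p$ have the same fitness vector.
   Context: Let $f=(f_1,\dots,f_m):\{0,1\}^n\to\mathbb N_0^m$ be an $m$-objective function to be maximized, and $f_{\max}:=\max\{f_j(x): x\in\{0,1\}^n, j\in[m]\}$, assumed $\ge 1$. For $x,y\in\{0,1\}^n$: $x\succeq y$ ($x$ weakly dominates $y$) iff $f_j(x)\ge f_j(y)$ for all $j$; $x\succ y$ iff $x\succeq y$ and $f_j(x)>f_j(y)$ for some $j$; $x,y$ are incomparable if neither $x\succeq y$ nor $y\succeq x$. For $p\in\mathbb N$ the reference set is $\mathcal R_p=\{(a_1/p,\dots,a_m/p): (a_1,\dots,a_m)\in\mathbb N_0^m,\ \sum_i a_i=p\}$. NSGA-III with population size $\mu$, threshold $\varepsilon_{\mathrm{nad}}>0$ and reference set $\mathcal R_p$: start with a population $P_0$ (a multiset of $\mu$ bit strings; arbitrary), $E_0=\{(-\infty,\dots,-\infty)\}$, $y^{\max}=(-\infty,\dots,-\infty)$, $y^{\min}=(+\infty,\dots,+\infty)$. In generation $t=0,1,2,\dots$: (1) Offspring: $Q_t$ consists of $\mu$ offspring, each created independently by choosing a parent uniformly at random from $P_t$ and flipping each of its bits independently with probability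 $1/n$. (2) Sorting: $R_t=P_t\cup Q_t$ (multiset of size $2\mu$) is partitioned into layers $F^1_t,\dots,F^k_t$, where $F^1_t$ consists of the members of $R_t$ not dominated (w.r.t. $\succ$) by any member of $R_t$, and $F^i_t$ consists of the members of $R_t\setminus(F^1_t\cup\dots\cup F^{i-1}_t)$ not dominated by any member of that set. Let $i^*$ be the index with $\sum_{i<i^*}|F^i_t|<\mu\le\sum_{i\le i^*}|F^i_t|$, and $Y_t=\bigcup_{i<i^*}F^i_t$. (3) Normalization: for each $j$, set $y^{\min}_j\leftarrow\min(y^{\min}_j,\min_{x\in R_t}f_j(x))$ and $y^{\max}_j\leftarrow\max(y^{\max}_j,\max_{x\in F^1_t}f_j(x))$ (so these are running extremes over all generations so far), and choose an extreme point $e^{(j)}\in f(Y_t\cup F^{i^*}_t)\cup E_t$ by some fixed rule (originally via an achievement scalarization function); set $E_{t+1}=\{e^{(1)},\dots,e^{(m)}\}$. If $e^{(1)},\dots,e^{(m)}$ are linearly independent, let $H$ be the affine hyperplane through them; if for every $j$ the hyperplane $H$ meets the $j$-th coordinate axis in exactly one point $I_j u_j$ ($u_j$ the $j$-th unit vector) with $\varepsilon_{\mathrm{nad}}\le I_j\le y^{\max}_j$, set $y^{\mathrm{nad}}_j=I_j$ for all $j$. Otherwise (including linear dependence) set $y^{\mathrm{nad}}_j=\max_{x\in F^1_t}f_j(x)$ for all $j$. Afterwards, for every $j$ with $y^{\mathrm{nad}}_j<y^{\min}_j+\varepsilon_{\mathrm{nad}}$, reset $y^{\mathrm{nad}}_j=\max_{x\in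 R_t}f_j(x)$. The normalized objectives are $f^n_j(x)=(f_j(x)-y^{\min}_j)/(y^{\mathrm{nad}}_j-y^{\min}_j)$ (with the convention $f^n_j(x):=0$ if the denominator is $0$), $f^n=(f^n_1,\dots,f^n_m)$. (4) Association: each $x\in Y_t\cup F^{i^*}_t$ is associated with a reference point $\mathrm{rp}(x)\in\mathcal R_p$ minimizing the Euclidean distance from $f^n(x)$ to the line $\{\lambda r:\lambda\in\mathbb R\}$ (equivalently, minimizing the angle between $f^n(x)$ and $r$); ties are broken by a deterministic rule depending only on $f^n(x)$. (5) Selection: let $\rho_r=|\{x\in Y_t:\mathrm{rp}(x)=r\}|$ for $r\in\mathcal R_p$, $\tilde F=\emptyset$, $R'=\mathcal R_p$. Repeat: choose $r\in R'$ with minimal $\rho_r$ (ties uniformly at random); if some $x\in F^{i^*}_t\setminus\tilde F$ has $\mathrm{rp}(x)=r$, add to $\tilde F$ such an $x$ minimizing the distance between $f^n(x)$ and $r$ (ties uniformly at random), increase $\rho_r$ by one, and stop as soon as $|Y_t|+|\tilde F|=\mu$; otherwise remove $r$ from $R'$. Set $P_{t+1}=Y_t\cup\tilde F$. *)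

theory Defs
  imports "HOL-Analysis.Analysis" "HOL-Library.Multiset"
begin

text \<open>Objective functions are f :: bool list => nat^'m (m = CARD('m) objectives);
  search points are bit strings of length n (bool lists).\<close>

definition fmax :: "nat \<Rightarrow> (bool list \<Rightarrow> nat^'m) \<Rightarrow> nat" where
  "fmax n f = Max {f x $ j | x j. length x = n}"

definition weakly_dom :: "(bool list \<Rightarrow> nat^'m) \<Rightarrow> bool list \<Rightarrow> bool list \<Rightarrow> bool" where
  "weakly_dom f x y \<longleftrightarrow> (\<forall>j. f y $ j \<le> f x $ j)"

definition strictly_dom :: "(bool list \<Rightarrow> nat^'m) \<Rightarrow> bool list \<Rightarrow> bool list \<Rightarrow> bool" where
  "strictly_dom f x y \<longleftrightarrow> weakly_dom f x y \<and> (\<exists>j. f y $ j < f x $ j)"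

definition nondom_part :: "(bool list \<Rightarrow> nat^'m) \<Rightarrow> bool list multiset \<Rightarrow> bool list multiset" where
  "nondom_part f R = filter_mset (\<lambda>x. \<not> (\<exists>y\<in>#R. strictly_dom f y x)) R"

primrec rest :: "(bool list \<Rightarrow> nat^'m) \<Rightarrow> bool list multiset \<Rightarrow> nat \<Rightarrow> bool list multiset" where
  "rest f R 0 = R"
| "rest f R (Suc i) = rest f R i - nondom_part f (rest f R i)"

text \<open>front f R i is the layer F^(i+1) (0-indexed); front f R 0 = F^1.\<close>
definition front :: "(bool list \<Rightarrow> nat^'m) \<Rightarrow> bool list multiset \<Rightarrow> nat \<Rightarrow> bool list multiset" where
  "front f R i = nondom_part f (rest f R i)"

text \<open>0-indexed critical layer index i* - 1.\<close>
definition crit_idx :: "(bool list \<Rightarrow> nat^'m) \<Rightarrow> nat \<Rightarrow> bool list multiset \<Rightarrow> nat" where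
  "crit_idx f \<mu> R = (LEAST k. \<mu> \<le> size (R - rest f R (Suc k)))"

text \<open>Y_t = union of the layers before the critical one.\<close>
definition Yset :: "(bool list \<Rightarrow> nat^'m) \<Rightarrow> nat \<Rightarrow> bool list multiset \<Rightarrow> bool list multiset" where
  "Yset f \<mu> R = R - rest f R (crit_idx f \<mu> R)"

definition Fcrit :: "(bool list \<Rightarrow> nat^'m) \<Rightarrow> nat \<Rightarrow> bool list multiset \<Rightarrow> bool list multiset" where
  "Fcrit f \<mu> R = front f R (crit_idx f \<mu> R)"

definition ref_set :: "nat \<Rightarrow> (real^'m) set" where
  "ref_set p = {(\<chi> i. real (a $ i) / real p) | a :: nat^'m. (\<Sum>i\<in>UNIV. a $ i) = p}"

definition line_dist :: "real^'m \<Rightarrow> real^'m \<Rightarrow> real" where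
  "line_dist v r = infdist v (range (\<lambda>c::real. c *\<^sub>R r))"

definition is_assoc_rule :: "nat \<Rightarrow> (real^'m \<Rightarrow> real^'m) \<Rightarrow> bool" where
  "is_assoc_rule p assoc \<longleftrightarrow>
     (\<forall>v. assoc v \<in> ref_set p \<and> (\<forall>r\<in>ref_set p. line_dist v (assoc v) \<le> line_dist v r))"

definition fvec :: "(bool list \<Rightarrow> nat^'m) \<Rightarrow> bool list \<Rightarrow> ereal^'m" where
  "fvec f x = (\<chi> k. ereal (real (f x $ k)))"

definition upd_min :: "(bool list \<Rightarrow> nat^'m) \<Rightarrow> bool list multiset \<Rightarrow> ereal^'m \<Rightarrow> ereal^'m" where
  "upd_min f R ymin = (\<chi> j. min (ymin $ j) (ereal (Min ((\<lambda>x. real (f x $ j)) ` set_mset R))))"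

definition upd_max :: "(bool list \<Rightarrow> nat^'m) \<Rightarrow> bool list multiset \<Rightarrow> ereal^'m \<Rightarrow> ereal^'m" where
  "upd_max f F1 ymax = (\<chi> j. max (ymax $ j) (ereal (Max ((\<lambda>x. real (f x $ j)) ` set_mset F1))))"

definition ext_real :: "('m \<Rightarrow> ereal^'m) \<Rightarrow> 'm \<Rightarrow> real^'m" where
  "ext_real es j = (\<chi> k. real_of_ereal (es j $ k))"

definition intercept :: "('m \<Rightarrow> ereal^'m) \<Rightarrow> 'm \<Rightarrow> real" where
  "intercept es j = (THE I. I *\<^sub>R axis j (1::real) \<in> affine hull (range (ext_real es)))"

definition hyperplane_ok :: "real \<Rightarrow> ereal^'m \<Rightarrow> ('m \<Rightarrow> ereal^'m) \<Rightarrow> bool" where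
  "hyperplane_ok eps ymax es \<longleftrightarrow>
     (\<forall>j k. \<bar>es j $ k\<bar> \<noteq> \<infinity>) \<and>
     inj (ext_real es) \<and> independent (range (ext_real es)) \<and>
     (\<forall>j. \<exists>!I. I *\<^sub>R axis j (1::real) \<in> affine hull (range (ext_real es))) \<and>
     (\<forall>j. eps \<le> intercept es j \<and> ereal (intercept es j) \<le> ymax $ j)"

definition nadir :: "real \<Rightarrow> (bool list \<Rightarrow> nat^'m) \<Rightarrow> bool list multiset \<Rightarrow> bool list multiset
                     \<Rightarrow> real^'m \<Rightarrow> ereal^'m \<Rightarrow> ('m \<Rightarrow> ereal^'m) \<Rightarrow> real^'m" where
  "nadir eps f R F1 ymin ymax es =
    (let pre = (if hyperplane_ok eps ymax es then (\<chi> j. intercept es j)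
                else (\<chi> j. Max ((\<lambda>x. real (f x $ j)) ` set_mset F1)))
     in (\<chi> j. if pre $ j < ymin $ j + eps then Max ((\<lambda>x. real (f x $ j)) ` set_mset R)
              else pre $ j))"

definition fnorm :: "(bool list \<Rightarrow> nat^'m) \<Rightarrow> real^'m \<Rightarrow> real^'m \<Rightarrow> bool list \<Rightarrow> real^'m" where
  "fnorm f ymin ynad x =
    (\<chi> j. if ynad $ j - ymin $ j = 0 then 0
          else (real (f x $ j) - ymin $ j) / (ynad $ j - ymin $ j))"

definition normf :: "real \<Rightarrow> (bool list \<Rightarrow> nat^'m) \<Rightarrow> bool list multiset \<Rightarrow> ereal^'m \<Rightarrow> ereal^'m
                     \<Rightarrow> ('m \<Rightarrow> ereal^'m) \<Rightarrow> bool list \<Rightarrow> real^'m" where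
  "normf eps f R ymin ymax es =
    (let F1 = front f R 0;
         ymin' = (\<chi> j. real_of_ereal (upd_min f R ymin $ j));
         ymax' = upd_max f F1 ymax
     in fnorm f ymin' (nadir eps f R F1 ymin' ymax' es))"

definition admissible_extremes :: "(bool list \<Rightarrow> nat^'m) \<Rightarrow> bool list multiset \<Rightarrow> (ereal^'m) set
                                   \<Rightarrow> ('m \<Rightarrow> ereal^'m) \<Rightarrow> bool" where
  "admissible_extremes f C E es \<longleftrightarrow> (\<forall>j. es j \<in> fvec f ` set_mset C \<union> E)"

text \<open>niche rpf d F k \<rho> Ft R' Fin: starting from counters \<rho>, already chosen Ft and
  remaining reference points R', the niching loop can terminate with the chosen multiset Fin
  (|Fin| = k = mu - |Y|).  rpf x is the associated reference point, d x the distance used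
  for choosing within a niche.\<close>
inductive niche :: "(bool list \<Rightarrow> real^'m) \<Rightarrow> (bool list \<Rightarrow> real) \<Rightarrow> bool list multiset \<Rightarrow> nat
                    \<Rightarrow> (real^'m \<Rightarrow> nat) \<Rightarrow> bool list multiset \<Rightarrow> (real^'m) set \<Rightarrow> bool list multiset \<Rightarrow> bool"
  for rpf d F k where
  add_stop: "\<lbrakk> r \<in> R'; \<forall>r'\<in>R'. \<rho> r \<le> \<rho> r'; x \<in># F - Ft; rpf x = r;
              \<forall>y\<in>#F - Ft. rpf y = r \<longrightarrow> d x \<le> d y; size (Ft + {#x#}) = k \<rbrakk>
             \<Longrightarrow> niche rpf d F k \<rho> Ft R' (Ft + {#x#})"
| add_cont: "\<lbrakk> r \<in> R'; \<forall>r'\<in>R'. \<rho> r \<le> \<rho> r'; x \<in># F - Ft; rpf x = r;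
              \<forall>y\<in>#F - Ft. rpf y = r \<longrightarrow> d x \<le> d y; size (Ft + {#x#}) \<noteq> k;
              niche rpf d F k (\<rho>(r := Suc (\<rho> r))) (Ft + {#x#}) R' Fin \<rbrakk>
             \<Longrightarrow> niche rpf d F k \<rho> Ft R' Fin"
| remove: "\<lbrakk> r \<in> R'; \<forall>r'\<in>R'. \<rho> r \<le> \<rho> r'; \<not> (\<exists>x\<in>#F - Ft. rpf x = r);
            niche rpf d F k \<rho> Ft (R' - {r}) Fin \<rbrakk>
           \<Longrightarrow> niche rpf d F k \<rho> Ft R' Fin"

definition valid_pop :: "nat \<Rightarrow> nat \<Rightarrow> bool list multiset \<Rightarrow> bool" where
  "valid_pop n k P \<longleftrightarrow> size P = k \<and> (\<forall>x\<in>#P. length x = n)"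

text \<open>States (P_t, E_t, y^max, y^min) reachable at the start of some generation t of some run
  (arbitrary initial population, arbitrary outcomes of the random choices, arbitrary choice of
  extreme points from the admissible set).  Every multiset of mu bit strings of length n is a
  possible offspring population Q_t (standard bit mutation has full support).\<close>
inductive nsga3_reachable :: "nat \<Rightarrow> nat \<Rightarrow> nat \<Rightarrow> real \<Rightarrow> (bool list \<Rightarrow> nat^'m) \<Rightarrow> (real^'m \<Rightarrow> real^'m)
      \<Rightarrow> bool list multiset \<Rightarrow> (ereal^'m) set \<Rightarrow> ereal^'m \<Rightarrow> ereal^'m \<Rightarrow> bool"
  for n \<mu> p eps f assoc where
  init: "valid_pop n \<mu> P0 \<Longrightarrow>
           nsga3_reachable n \<mu> p eps f assoc P0 {(\<chi> k. - \<infinity>)} (\<chi> k. - \<infinity>) (\<chi> k. \<infinity>)"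
| step: "\<lbrakk> nsga3_reachable n \<mu> p eps f assoc P E ymax ymin;
           valid_pop n \<mu> Q;
           admissible_extremes f (Yset f \<mu> (P + Q) + Fcrit f \<mu> (P + Q)) E es;
           niche (\<lambda>x. assoc (normf eps f (P + Q) ymin ymax es x))
                 (\<lambda>x. line_dist (normf eps f (P + Q) ymin ymax es x)
                                (assoc (normf eps f (P + Q) ymin ymax es x)))
                 (Fcrit f \<mu> (P + Q)) (\<mu> - size (Yset f \<mu> (P + Q)))
                 (\<lambda>r. size (filter_mset (\<lambda>x. assoc (normf eps f (P + Q) ymin ymax es x) = r)
                                        (Yset f \<mu> (P + Q))))
                 {#} (ref_set p) Fin \<rbrakk>
         \<Longrightarrow> nsga3_reachable n \<mu> p eps f assoc (Yset f \<mu> (P + Q) + Fin) (range es)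
               (upd_max f (front f (P + Q) 0) ymax) (upd_min f (P + Q) ymin)"

end

theory Submission imports Defs begin

lemma infdist_less_ex:
  assumes "A \<noteq> {}" "infdist x A < t"
  shows "\<exists>a\<in>A. dist x a < t"
proof -
  have "(INF a\<in>A. dist x a) < t" using assms by (simp add: infdist_notempty)
  moreover have "bdd_below ((\<lambda>a. dist x a) ` A)" by (rule bdd_belowI[of _ 0]) auto
  ultimately show ?thesis using assms(1) by (simp add: cINF_less_iff)
qed

lemma sep_lemma:
  fixes u w r :: "real^'m" and M :: real
  assumes "\<forall>k. 0 \<le> r$k" "dist u (cu *\<^sub>R r) < 1/(2*M)" "dist w (cw *\<^sub>R r) < 1/(2*M)"
    "u$i - w$i \<ge> 1/M" "w$j - u$j \<ge> 1/M"
  shows False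
proof -
  define eu where "eu = u - cu *\<^sub>R r"
  define ew where "ew = w - cw *\<^sub>R r"
  have n1: "norm eu < 1/(2*M)" "norm ew < 1/(2*M)" using assms(2,3) by (auto simp: eu_def ew_def dist_norm)
  have c: "\<bar>eu$k\<bar> < 1/(2*M)" "\<bar>ew$k\<bar> < 1/(2*M)" for k
    using n1 component_le_norm_cart[of eu k] component_le_norm_cart[of ew k] by auto
  have u: "u$k = cu * r$k + eu$k" and w: "w$k = cw * r$k + ew$k" for k by (auto simp: eu_def ew_def)
  show False
  proof (cases "cw \<le> cu")
    case True
    have "(cw - cu) * r$j \<le> 0" using True assms(1) by (simp add: mult_nonpos_nonneg)
    then have "w$j - u$j \<le> ew$j - eu$j" using u[of j] w[of j] by (simp add: algebra_simps)
    also have "\<dots> < 1/M" using c[of j] by (simp add: field_simps abs_less_iff)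
    finally show False using assms(5) by simp
  next
    case False
    have "(cu - cw) * r$i \<le> 0" using False assms(1) by (simp add: mult_nonpos_nonneg)
    then have "u$i - w$i \<le> eu$i - ew$i" using u[of i] w[of i] by (simp add: algebra_simps)
    also have "\<dots> < 1/M" using c[of i] by (simp add: field_simps abs_less_iff)
    finally show False using assms(4) by simp
  qed
qed

lemma round_lemma:
  fixes v :: "real^'m" and p :: nat
  assumes "\<forall>k. 0 \<le> v$k \<and> v$k \<le> 1" "\<exists>k. 0 < v$k" "0 < p"
  shows "\<exists>r\<in>ref_set p. line_dist v r < real CARD('m) powr (3/2) / real p"
proof -
  define s where "s = (\<Sum>k\<in>UNIV. v$k)"
  have spos: "0 < s" unfolding s_def using assms(1,2)
    by (metis (no_types, lifting) UNIV_I finite sum_pos2)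
  have sle: "s \<le> real CARD('m)" unfolding s_def
    using sum_mono[of UNIV "\<lambda>k. v$k" "\<lambda>_. 1"] assms(1) by auto
  define vh where "vh = (\<chi> k. v$k / s)"
  have vh0: "0 \<le> vh$k" for k using assms(1) spos by (simp add: vh_def)
  have vhsum: "(\<Sum>k\<in>UNIV. vh$k) = 1" using spos by (simp add: vh_def s_def sum_divide_distrib[symmetric])
  define c where "c k = nat \<lfloor>real p * vh$k\<rfloor>" for k
  have c1: "real (c k) \<le> real p * vh$k" for k using vh0[of k] by (simp add: c_def)
  have c2: "real p * vh$k < real (c k) + 1" for k using vh0[of k] by (simp add: c_def)
  have sc1: "real (\<Sum>k\<in>UNIV. c k) \<le> real p"
  proof -
    have "real (\<Sum>k\<in>UNIV. c k) = (\<Sum>k\<in>UNIV. real (c k))" by simp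
    also have "\<dots> \<le> (\<Sum>k\<in>UNIV. real p * vh$k)" by (rule sum_mono) (use c1 in auto)
    also have "\<dots> = real p" using vhsum by (simp add: sum_distrib_left[symmetric])
    finally show ?thesis .
  qed
  have sc2: "real p < real (\<Sum>k\<in>UNIV. c k) + real CARD('m)"
  proof -
    have "real p = (\<Sum>k\<in>UNIV. real p * vh$k)" using vhsum by (simp add: sum_distrib_left[symmetric])
    also have "\<dots> < (\<Sum>k\<in>UNIV. real (c k) + 1)" by (rule sum_strict_mono) (use c2 in auto)
    also have "\<dots> = real (\<Sum>k\<in>UNIV. c k) + real CARD('m)" by (simp add: sum.distrib)
    finally show ?thesis .
  qed
  define Rr where "Rr = p - (\<Sum>k\<in>UNIV. c k)"
  have Rr: "Rr + (\<Sum>k\<in>UNIV. c k) = p" "Rr \<le> CARD('m)" using sc1 sc2 unfolding Rr_def by linarith+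
  define T where "T = {k. real (c k) < real p * vh$k}"
  have RrT: "Rr \<le> card T"
  proof -
    have "real Rr = (\<Sum>k\<in>UNIV. real p * vh$k - real (c k))"
    proof -
      have "real p = real Rr + (\<Sum>k\<in>UNIV. real (c k))"
        using Rr(1) by (metis of_nat_add of_nat_sum)
      then show ?thesis using vhsum by (simp add: sum_subtractf sum_distrib_left[symmetric])
    qed
    also have "\<dots> = (\<Sum>k\<in>T. real p * vh$k - real (c k))"
      by (rule sum.mono_neutral_right) (use c1 in \<open>auto simp: T_def intro: order.not_eq_order_implies_strict\<close>)
    also have "\<dots> \<le> (\<Sum>k\<in>T. 1)" by (rule sum_mono) (smt (verit) c2)
    also have "\<dots> = real (card T)" by simp
    finally show ?thesis by simp
  qed
  obtain S :: "'m set" where S: "card S = Rr" "S \<subseteq> T" using RrT by (meson obtain_subset_with_card_n)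
  define a where "a = (\<chi> k. c k + (if k \<in> S then 1 else 0))"
  have asum: "(\<Sum>i\<in>UNIV. a $ i) = p"
  proof -
    have "(\<Sum>i\<in>UNIV. a $ i) = (\<Sum>k\<in>UNIV. c k) + (\<Sum>k\<in>UNIV. if k \<in> S then 1 else 0)"
      by (simp add: a_def sum.distrib)
    also have "(\<Sum>k\<in>UNIV. (if k \<in> S then 1 else 0::nat)) = card S"
      by (simp add: sum.If_cases)
    finally show ?thesis using S Rr(1) by simp
  qed
  define r where "r = (\<chi> i. real (a $ i) / real p)"
  have rin: "r \<in> ref_set p" unfolding ref_set_def r_def using asum by blast
  have err: "\<bar>vh$k - r$k\<bar> < 1 / real p" for k
  proof -
    have "\<bar>real p * vh$k - real (a$k)\<bar> < 1" using c1[of k] c2[of k] S(2) by (auto simp: a_def T_def)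
    then have "\<bar>real p * (vh$k - r$k)\<bar> < 1" using assms(3) by (simp add: r_def algebra_simps)
    then have "real p * \<bar>vh$k - r$k\<bar> < 1" by (simp add: abs_mult)
    then show ?thesis using assms(3) by (simp add: field_simps mult.commute)
  qed
  have nrm: "norm (vh - r) < sqrt (real CARD('m)) / real p"
  proof -
    have "norm (vh - r) = sqrt (\<Sum>k\<in>UNIV. (vh$k - r$k)^2)"
      by (simp add: norm_vec_def L2_set_def)
    also have "\<dots> < sqrt (\<Sum>k\<in>(UNIV::'m set). (1/real p)^2)"
    proof -
      have "(\<Sum>k\<in>UNIV. (vh$k - r$k)^2) < (\<Sum>k\<in>(UNIV::'m set). (1/real p)^2)"
      proof -
        have "(vh$k - r$k)^2 < (1/real p)^2" for k
          using err[of k] by (metis abs_ge_zero abs_power2 power_strict_mono zero_less_numeral power2_abs)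
        then show ?thesis by (intro sum_strict_mono) auto
      qed
      then show ?thesis by simp
    qed
    also have "\<dots> = sqrt (real CARD('m)) / real p" by (simp add: real_sqrt_mult power_divide real_sqrt_divide)
    finally show ?thesis .
  qed
  have vv: "v = s *\<^sub>R vh" using spos by (simp add: vh_def vec_eq_iff)
  have "line_dist v r \<le> dist v (s *\<^sub>R r)" unfolding line_dist_def by (rule infdist_le) auto
  also have "\<dots> = s * norm (vh - r)" by (simp add: vv dist_norm scaleR_diff_right[symmetric] spos less_imp_le)
  also have "\<dots> < s * (sqrt (real CARD('m)) / real p)" using nrm spos by (intro mult_strict_left_mono)
  also have "\<dots> \<le> real CARD('m) * (sqrt (real CARD('m)) / real p)"
    using sle by (intro mult_right_mono) auto
  also have "\<dots> = real CARD('m) powr (3/2) / real p"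
  proof -
    have "real CARD('m) powr (3/2) = real CARD('m) powr 1 * real CARD('m) powr (1/2)"
      by (subst powr_add[symmetric]) simp
    then show ?thesis by (simp add: powr_half_sqrt)
  qed
  finally show ?thesis using rin by blast
qed

lemma rest_sub: "rest f R i \<subseteq># R"
  by (induction i) (auto intro: subset_mset.order_trans[OF diff_subset_eq_self])

lemma front_sub: "front f R i \<subseteq># R"
  unfolding front_def nondom_part_def
  by (meson multiset_filter_subset rest_sub subset_mset.order_trans)

lemma nondom_ne:
  assumes "R \<noteq> {#}"
  shows "nondom_part f R \<noteq> {#}"
proof -
  define g where "g z = (\<Sum>j\<in>UNIV. f z $ j)" for z
  have "finite (g ` set_mset R)" "g ` set_mset R \<noteq> {}" using assms by auto
  then have "Max (g ` set_mset R) \<in> g ` set_mset R" by (rule Max_in)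
  then obtain z where z: "z \<in># R" "g z = Max (g ` set_mset R)" by auto
  have "\<not> strictly_dom f y z" if "y \<in># R" for y
  proof
    assume "strictly_dom f y z"
    then have "g z < g y" unfolding g_def strictly_dom_def weakly_dom_def
      by (intro sum_strict_mono_ex1) auto
    moreover have "g y \<le> g z" using z that by simp
    ultimately show False by simp
  qed
  then have "z \<in># nondom_part f R" using z by (auto simp: nondom_part_def)
  then show ?thesis by auto
qed

lemma niche_sub: "niche rpf d F k \<rho> Ft R' Fin \<Longrightarrow> z \<in># Fin \<Longrightarrow> z \<in># Ft \<or> z \<in># F"
  by (induction rule: niche.induct) (auto dest: in_diffD)

lemma fmax_ge:
  assumes "length z = n"
  shows "f z $ j \<le> fmax n f"
proof -
  have "{f x $ j | x j. length x = n} = (\<lambda>(x,j). f x $ j) ` ({x. length x = n} \<times> UNIV)" by auto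
  moreover have "finite {x::bool list. length x = n}" using finite_lists_length_eq[of "UNIV::bool set" n] by simp
  ultimately have "finite {f x $ j | x j. length x = n}" by simp
  then show ?thesis unfolding fmax_def using assms by (intro Max_ge) auto
qed

lemma Max_le_fmax:
  assumes "F \<noteq> {#}" "\<forall>z\<in>#F. length z = n"
  shows "Max ((\<lambda>x. real (f x $ j)) ` set_mset F) \<le> real (fmax n f)"
  using assms fmax_ge[of _ n f j] by (subst Max_le_iff) auto

lemma invariant:
  assumes "nsga3_reachable n \<mu> p eps f assoc P E ymax ymin" "1 \<le> \<mu>"
  shows "(\<forall>z\<in>#P. length z = n) \<and> (\<forall>j. ymax$j \<le> ereal (real (fmax n f))) \<and> (\<forall>j. 0 \<le> ymin$j)"
  using assms(1)
proof (induction rule: nsga3_reachable.induct)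
  case (init P0)
  then show ?case by (auto simp: valid_pop_def)
next
  case (step P E ymax ymin Q es Fin)
  let ?R = "P + Q"
  have Qne: "Q \<noteq> {#}" using step(2) assms(2) by (auto simp: valid_pop_def)
  have Rlen: "\<forall>z\<in>#?R. length z = n" using step by (auto simp: valid_pop_def)
  have F1ne: "front f ?R 0 \<noteq> {#}" unfolding front_def using Qne by (simp add: nondom_ne)
  have F1len: "\<forall>z\<in>#front f ?R 0. length z = n" using Rlen front_sub by (metis mset_subset_eqD)
  have 1: "\<forall>z\<in>#Yset f \<mu> ?R + Fin. length z = n"
  proof
    fix z assume "z \<in># Yset f \<mu> ?R + Fin"
    then consider "z \<in># Yset f \<mu> ?R" | "z \<in># Fin" by auto
    then have "z \<in># ?R"
    proof cases
      case 1 then show ?thesis unfolding Yset_def by (auto dest: in_diffD)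
    next
      case 2
      then have "z \<in># Fcrit f \<mu> ?R" using niche_sub[OF step(4)] by auto
      then show ?thesis unfolding Fcrit_def using front_sub by (metis mset_subset_eqD)
    qed
    then show "length z = n" using Rlen by blast
  qed
  have 2: "upd_max f (front f ?R 0) ymax $ j \<le> ereal (real (fmax n f))" for j
    using step.IH Max_le_fmax[OF F1ne F1len, of f j] by (simp add: upd_max_def)
  have 3: "0 \<le> upd_min f ?R ymin $ j" for j
  proof -
    have "0 \<le> Min ((\<lambda>x. real (f x $ j)) ` set_mset ?R)" using Qne by (subst Min_ge_iff) auto
    then show ?thesis using step.IH by (simp add: upd_min_def)
  qed
  show ?case using 1 2 3 by blast
qed

lemma norm_bounds:
  fixes g :: "'a \<Rightarrow> real"
  assumes "finite S" "S \<noteq> {}" "\<forall>z\<in>S. ymn \<le> g z \<and> g z \<le> M" "0 \<le> ymn" "M \<le> eps" "pre \<le> M"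
    "nd = (if pre < ymn + eps then Max (g ` S) else pre)"
  shows "0 \<le> nd - ymn \<and> nd - ymn \<le> M \<and> (\<forall>z\<in>S. g z - ymn \<le> nd - ymn)"
proof (cases "pre < ymn + eps")
  case True
  then have nd: "nd = Max (g ` S)" using assms(7) by simp
  obtain z0 where "z0 \<in> S" using assms(2) by auto
  have "g z0 \<le> Max (g ` S)" using assms(1) \<open>z0 \<in> S\<close> by simp
  moreover have "Max (g ` S) \<le> M" using assms(1,2,3) by (subst Max_le_iff) auto
  moreover have "\<forall>z\<in>S. g z \<le> Max (g ` S)" using assms(1) by simp
  ultimately show ?thesis using nd assms(3,4) \<open>z0 \<in> S\<close> by force
next
  case False
  then show ?thesis using assms by force
qed

lemma nadir_comp:
  "nadir eps f R F1 ymn ymx es $ j =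
    (let pj = (if hyperplane_ok eps ymx es then intercept es j else Max ((\<lambda>x. real (f x $ j)) ` set_mset F1))
     in if pj < ymn$j + eps then Max ((\<lambda>x. real (f x $ j)) ` set_mset R) else pj)"
  by (simp add: nadir_def Let_def)

theorem lemma3:
  fixes n \<mu> p :: nat and eps :: real
    and f :: "bool list \<Rightarrow> nat^'m" and assoc :: "real^'m \<Rightarrow> real^'m"
    and P Q :: "bool list multiset" and E :: "(ereal^'m) set" and ymax ymin :: "ereal^'m"
    and es :: "'m \<Rightarrow> ereal^'m" and x y :: "bool list"
  assumes "1 \<le> \<mu>"
    and "1 \<le> fmax n f"
    and "real (fmax n f) \<le> eps"
    and "2 * real CARD('m) powr (3/2) * real (fmax n f) \<le> real p"
    and "is_assoc_rule p assoc"
    and "nsga3_reachable n \<mu> p eps f assoc P E ymax ymin"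
    and "valid_pop n \<mu> Q"
    and "admissible_extremes f (Yset f \<mu> (P + Q) + Fcrit f \<mu> (P + Q)) E es"
    and "x \<in># front f (P + Q) 0" and "y \<in># front f (P + Q) 0"
    and "assoc (normf eps f (P + Q) ymin ymax es x) = assoc (normf eps f (P + Q) ymin ymax es y)"
  shows "f x = f y"
proof (rule ccontr)
  assume neq: "f x \<noteq> f y"
  define R where "R = P + Q"
  define F1 where "F1 = front f R 0"
  define ym where "ym = (\<chi> j. real_of_ereal (upd_min f R ymin $ j))"
  define yx where "yx = upd_max f F1 ymax"
  define nd where "nd = nadir eps f R F1 ym yx es"
  define nf where "nf = normf eps f R ymin ymax es"
  define M where "M = real (fmax n f)"
  have M1: "1 \<le> M" using assms(2) by (simp add: M_def)
  have inv: "(\<forall>z\<in>#P. length z = n) \<and> (\<forall>j. ymax$j \<le> ereal M) \<and> (\<forall>j. 0 \<le> ymin$j)"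
    using invariant[OF assms(6,1)] by (simp add: M_def)
  have Qne: "Q \<noteq> {#}" using assms(7,1) by (auto simp: valid_pop_def)
  have Rlen: "\<forall>z\<in>#R. length z = n" using inv assms(7) by (auto simp: valid_pop_def R_def)
  have Rne: "R \<noteq> {#}" using Qne by (simp add: R_def)
  have xF: "x \<in># R" "\<not> (\<exists>z\<in>#R. strictly_dom f z x)" using assms(9)
    by (auto simp: front_def nondom_part_def R_def)
  have yF: "y \<in># R" "\<not> (\<exists>z\<in>#R. strictly_dom f z y)" using assms(10)
    by (auto simp: front_def nondom_part_def R_def)
  have F1ne: "F1 \<noteq> {#}" using assms(9) by (auto simp: F1_def R_def)
  have F1len: "\<forall>z\<in>#F1. length z = n" using Rlen front_sub unfolding F1_def by (metis mset_subset_eqD)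
  have fle: "real (f z $ j) \<le> M" if "z \<in># R" for z j
    using fmax_ge[of z n f j] Rlen that by (simp add: M_def)
  have ymj: "0 \<le> ym$j \<and> (\<forall>z\<in>#R. ym$j \<le> real (f z $ j))" for j
  proof -
    define m0 where "m0 = Min ((\<lambda>x. real (f x $ j)) ` set_mset R)"
    have m0: "0 \<le> m0" "\<forall>z\<in>#R. m0 \<le> real (f z $ j)" using Rne by (auto simp: m0_def)
    have um: "upd_min f R ymin $ j = min (ymin $ j) (ereal m0)" by (simp add: upd_min_def m0_def)
    have "0 \<le> ymin$j" using inv by blast
    moreover have "ym$j = real_of_ereal (min (ymin$j) (ereal m0))" by (simp add: ym_def um)
    ultimately show ?thesis using m0
      by (cases "ymin$j") (auto simp: min_def)
  qed
  have prej: "(if hyperplane_ok eps yx es then intercept es j else Max ((\<lambda>x. real (f x $ j)) ` set_mset F1)) \<le> M" for j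
  proof -
    have mF: "Max ((\<lambda>x. real (f x $ j)) ` set_mset F1) \<le> M"
      using Max_le_fmax[OF F1ne F1len, of f j] by (simp add: M_def)
    have "yx $ j \<le> ereal M" using mF inv by (simp add: yx_def upd_max_def)
    then have "hyperplane_ok eps yx es \<Longrightarrow> intercept es j \<le> M"
      unfolding hyperplane_ok_def by (metis ereal_less_eq(3) order.trans)
    then show ?thesis using mF by auto
  qed
  have bounds: "0 \<le> nd$j - ym$j \<and> nd$j - ym$j \<le> M \<and> (\<forall>z\<in>#R. real (f z $ j) - ym$j \<le> nd$j - ym$j)" for j
  proof -
    have "0 \<le> nd$j - ym$j \<and> nd$j - ym$j \<le> M \<and> (\<forall>z\<in>set_mset R. real (f z $ j) - ym$j \<le> nd$j - ym$j)"
      apply (rule norm_bounds[where g="\<lambda>x. real (f x $ j)" and eps=eps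
            and pre="if hyperplane_ok eps yx es then intercept es j else Max ((\<lambda>x. real (f x $ j)) ` set_mset F1)"])
      using Rne ymj[of j] fle assms(3) prej[of j] by (auto simp: nd_def nadir_comp Let_def M_def)
    then show ?thesis by simp
  qed
  have nfj: "nf z $ j = (if nd$j - ym$j = 0 then 0 else (real (f z $ j) - ym$j) / (nd$j - ym$j))" for z j
    by (simp add: nf_def normf_def Let_def fnorm_def nd_def ym_def yx_def F1_def)
  have rng: "0 \<le> nf z $ j \<and> nf z $ j \<le> 1" if "z \<in># R" for z j
  proof -
    have "0 \<le> real (f z $ j) - ym$j" "real (f z $ j) - ym$j \<le> nd$j - ym$j"
      using ymj[of j] bounds[of j] that by auto
    then show ?thesis unfolding nfj by (auto simp: divide_le_eq_1)
  qed
  have dif: "nf z1 $ j - nf z2 $ j \<ge> 1/M" if "z1 \<in># R" "z2 \<in># R" "f z2 $ j < f z1 $ j" for z1 z2 j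
  proof -
    define d where "d = nd$j - ym$j"
    have g1: "real (f z2 $ j) + 1 \<le> real (f z1 $ j)" using that(3) by linarith
    have "real (f z1 $ j) - ym$j \<le> d" "ym$j \<le> real (f z2 $ j)" "d \<le> M"
      using bounds[of j] ymj[of j] that by (auto simp: d_def)
    then have dpos: "0 < d" using g1 by linarith
    have "nf z1 $ j - nf z2 $ j = (real (f z1 $ j) - real (f z2 $ j)) / d"
      using dpos unfolding nfj d_def[symmetric] by (simp add: diff_divide_distrib)
    also have "\<dots> \<ge> 1 / d" using dpos g1 by (simp add: divide_right_mono)
    moreover have "1/d \<ge> 1/M" using dpos \<open>d \<le> M\<close> by (simp add: frac_le)
    ultimately show ?thesis by linarith
  qed
  obtain i where i: "f y $ i < f x $ i"
  proof (rule ccontr)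
    assume "\<not> thesis"
    then have "\<forall>i. f x $ i \<le> f y $ i" using that by (meson not_le)
    moreover obtain k where "f x $ k \<noteq> f y $ k" using neq by (auto simp: vec_eq_iff)
    ultimately have "strictly_dom f y x" unfolding strictly_dom_def weakly_dom_def
      using le_neq_implies_less by blast
    then show False using xF yF by blast
  qed
  obtain j where j: "f x $ j < f y $ j"
  proof (rule ccontr)
    assume "\<not> thesis"
    then have "\<forall>i. f y $ i \<le> f x $ i" using that by (meson not_le)
    moreover obtain k where "f x $ k \<noteq> f y $ k" using neq by (auto simp: vec_eq_iff)
    ultimately have "strictly_dom f x y" unfolding strictly_dom_def weakly_dom_def
      using le_neq_implies_less by (metis)
    then show False using xF yF by blast
  qed
  define u where "u = nf x"
  define w where "w = nf y"
  have ui: "u$i - w$i \<ge> 1/M" using dif[OF xF(1) yF(1) i] by (simp add: u_def w_def)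
  have wj: "w$j - u$j \<ge> 1/M" using dif[OF yF(1) xF(1) j] by (simp add: u_def w_def)
  have Mpos: "0 < M" using M1 by simp
  have cpos: "0 < real CARD('m) powr (3/2)" by simp
  have ppos: "0 < p"
  proof -
    have "0 < 2 * real CARD('m) powr (3/2) * real (fmax n f)" using cpos Mpos unfolding M_def
      by (intro mult_pos_pos) auto
    then have "0 < real p" using assms(4) by linarith
    then show ?thesis by simp
  qed
  have thr: "real CARD('m) powr (3/2) / real p \<le> 1/(2*M)"
    using assms(4) ppos Mpos by (simp add: field_simps M_def)
  have close: "\<exists>c. dist v (c *\<^sub>R assoc v) < 1/(2*M)"
    if "v \<in> {u, w}" for v
  proof -
    have "\<forall>k. 0 \<le> v$k \<and> v$k \<le> 1" using that rng xF(1) yF(1) by (auto simp: u_def w_def)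
    moreover have "\<exists>k. 0 < v$k"
    proof (cases "v = u")
      case True
      have "0 \<le> w$i" using rng yF(1) by (simp add: w_def)
      moreover have "0 < 1/M" using Mpos by simp
      ultimately have "0 < u$i" using ui by linarith
      then show ?thesis using True by blast
    next
      case False
      then have "v = w" using that by auto
      have "0 \<le> u$j" using rng xF(1) by (simp add: u_def)
      moreover have "0 < 1/M" using Mpos by simp
      ultimately have "0 < w$j" using wj by linarith
      then show ?thesis using \<open>v = w\<close> by blast
    qed
    ultimately obtain r where r: "r \<in> ref_set p" "line_dist v r < real CARD('m) powr (3/2) / real p"
      using round_lemma ppos by blast
    have "line_dist v (assoc v) \<le> line_dist v r" using assms(5) r(1) by (simp add: is_assoc_rule_def)
    then have "infdist v (range (\<lambda>c::real. c *\<^sub>R assoc v)) < 1/(2*M)"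
      using r(2) thr by (simp add: line_dist_def)
    then show ?thesis using infdist_less_ex[of "range (\<lambda>c::real. c *\<^sub>R assoc v)"] by auto
  qed
  have same: "assoc u = assoc w" using assms(11) by (simp add: u_def w_def nf_def R_def)
  obtain cu where cu: "dist u (cu *\<^sub>R assoc u) < 1/(2*M)" using close[of u] by auto
  obtain cw where cw: "dist w (cw *\<^sub>R assoc u) < 1/(2*M)" using close[of w] same by auto
  have "assoc u \<in> ref_set p" using assms(5) by (simp add: is_assoc_rule_def)
  then have nonneg: "\<forall>k. 0 \<le> assoc u $ k" unfolding ref_set_def
    by (auto intro!: divide_nonneg_nonneg sum_nonneg)
  show False by (rule sep_lemma[OF nonneg cu cw ui wj])
qed

end
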